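(* Let $\mathcal H$ be the Hilbert space of $n$ qubits, $d=2^n$. Let $\mathsf H_0=\{|\Psi\rangle\langle\Psi| : |\Psi\rangle=|\phi\rangle\otimes|\psi\rangle,\ |\phi\rangle,|\psi\rangle\in\mathcal H \text{ unit vectors}\}$ and $\mathsf H_1=\{|\Psi\rangle\langle\Psi| : |\Psi\rangle\in\mathcal H^{\otimes2}\text{ maximally entangled}\}$. Then for every POVM $\{M_0,M_1\}$ on $\mathcal H^{\otimes 2}$ (outcome $i$ meaning "the state is in $\mathsf H_i$"), $$\sup_{\rho\in\mathsf H_0}\operatorname{tr}(M_1\rho)+\sup_{\rho\in\mathsf H_1}\operatorname{tr}(M_0\rho)\ \ge\ 1;$$ in particular, if $\operatorname{tr}(M_0\rho)\le\delta$ for all $\rho\in\mathsf H_1$, then $\operatorname{tr}(M_1\rho)\ge1-\delta$ for some $\rho\in\mathsf H_0$, i.e., no measurement distinguishes $\mathsf H_0$ from $\mathsf H_1$ better than guessing at random.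
   Context: A pure state $|\Psi\rangle\in\mathcal H^{\otimes 2}$ is maximally entangled if $|\Psi\rangle=\sum_{i=1}^d\alpha_i|e_i\rangle\otimes|f_i\rangle$ with $|\alpha_i|^2=1/d$ for all $i$, for some orthonormal bases $\{|e_i\rangle\}$ and $\{|f_i\rangle\}$ of $\mathcal H$. A POVM $\{M_0,M_1\}$ is a pair of positive semidefinite operators with $M_0+M_1=I$; outcome $i$ occurs with probability $\operatorname{tr}(M_i\rho)$. *)

theory Defs
  imports Complex_Main "Jordan_Normal_Form.Matrix" "Jordan_Normal_Form.Schur_Decomposition"
begin

text \<open>The space of n qubits is \<open>carrier_vec (2^n)\<close>;
  the two-fold tensor product has dimension d*d, with basis index \<open>i*d + j\<close> for e_i (x) e_j.\<close>

definition trace_mat :: "complex mat \<Rightarrow> complex" where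
  "trace_mat A = (\<Sum>i<dim_row A. A $$ (i, i))"

definition tensor_vec :: "complex vec \<Rightarrow> complex vec \<Rightarrow> complex vec" where
  "tensor_vec u v = vec (dim_vec u * dim_vec v) (\<lambda>k. u $ (k div dim_vec v) * v $ (k mod dim_vec v))"

definition outer_proj :: "complex vec \<Rightarrow> complex mat" where
  "outer_proj v = mat (dim_vec v) (dim_vec v) (\<lambda>(i, j). v $ i * cnj (v $ j))"

definition unit_vector :: "nat \<Rightarrow> complex vec \<Rightarrow> bool" where
  "unit_vector d v \<longleftrightarrow> v \<in> carrier_vec d \<and> v \<bullet>c v = 1"

definition orthonormal_basis :: "nat \<Rightarrow> (nat \<Rightarrow> complex vec) \<Rightarrow> bool" where
  "orthonormal_basis d e \<longleftrightarrow>
     (\<forall>i<d. e i \<in> carrier_vec d) \<and>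
     (\<forall>i<d. \<forall>j<d. e i \<bullet>c e j = (if i = j then 1 else 0))"

definition maximally_entangled :: "nat \<Rightarrow> complex vec \<Rightarrow> bool" where
  "maximally_entangled d \<Psi> \<longleftrightarrow>
     (\<exists>e f (\<alpha> :: nat \<Rightarrow> complex).
        orthonormal_basis d e \<and> orthonormal_basis d f \<and>
        (\<forall>i<d. (cmod (\<alpha> i))\<^sup>2 = 1 / real d) \<and>
        \<Psi> = vec (d * d) (\<lambda>k. \<Sum>i<d. \<alpha> i * tensor_vec (e i) (f i) $ k))"

definition psd :: "nat \<Rightarrow> complex mat \<Rightarrow> bool" where
  "psd N M \<longleftrightarrow> M \<in> carrier_mat N N \<and> mat_adjoint M = M \<and>
     (\<forall>v \<in> carrier_vec N. 0 \<le> Re ((M *\<^sub>v v) \<bullet>c v))"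

definition two_outcome_povm :: "nat \<Rightarrow> complex mat \<Rightarrow> complex mat \<Rightarrow> bool" where
  "two_outcome_povm N M0 M1 \<longleftrightarrow> psd N M0 \<and> psd N M1 \<and> M0 + M1 = 1\<^sub>m N"

definition product_states :: "nat \<Rightarrow> complex mat set" where
  "product_states d = {outer_proj (tensor_vec \<phi> \<psi>) | \<phi> \<psi>. unit_vector d \<phi> \<and> unit_vector d \<psi>}"

definition max_entangled_states :: "nat \<Rightarrow> complex mat set" where
  "max_entangled_states d = {outer_proj \<Psi> | \<Psi>. \<Psi> \<in> carrier_vec (d * d) \<and> maximally_entangled d \<Psi>}"

text \<open>Outcome probability \<open>tr(M \<rho>)\<close> (a real number for PSD M and density \<rho>).\<close>
definition outcome_prob :: "complex mat \<Rightarrow> complex mat \<Rightarrow> real" where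
  "outcome_prob M \<rho> = Re (trace_mat (M * \<rho>))"

end

theory Submission
  imports Defs "HOL-Library.Real_Mod"
begin

lemma qf:
  assumes v: "v \<in> carrier_vec N" and M: "M \<in> carrier_mat N N"
  shows "(M *\<^sub>v v) \<bullet>c v = (\<Sum>k<N. \<Sum>l<N. cnj (v$k) * M$$(k,l) * v$l)"
  using v M
  by (auto simp: scalar_prod_def row_def sum_distrib_left sum_distrib_right lessThan_atLeast0 mult.commute mult.left_commute intro!: sum.cong)

lemma trace_outer:
  assumes v: "v \<in> carrier_vec N" and M: "M \<in> carrier_mat N N"
  shows "trace_mat (M * outer_proj v) = (M *\<^sub>v v) \<bullet>c v"
  using v M unfolding qf[OF v M] trace_mat_def outer_proj_def
  by (auto simp: scalar_prod_def row_def col_def sum_distrib_left sum_distrib_right lessThan_atLeast0 mult.commute mult.left_commute intro!: sum.cong)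

lemma self_prod:
  assumes v: "v \<in> carrier_vec N"
  shows "v \<bullet>c v = of_real (\<Sum>k<N. (cmod (v$k))\<^sup>2)"
  using v by (auto simp: scalar_prod_def lessThan_atLeast0 intro!: sum.cong, metis complex_norm_square of_real_power)

lemma unit_entry:
  assumes v: "v \<in> carrier_vec N" and "v \<bullet>c v = 1" and j: "j < N"
  shows "cmod (v$j) \<le> 1"
proof -
  have "(\<Sum>k<N. (cmod (v$k))\<^sup>2) = 1" using self_prod[OF v] assms(2)
    by (metis of_real_eq_1_iff)
  moreover have "(cmod (v$j))\<^sup>2 \<le> (\<Sum>k<N. (cmod (v$k))\<^sup>2)"
    by (rule member_le_sum) (use j in auto)
  ultimately have "(cmod (v$j))\<^sup>2 \<le> 1" by simp
  thus ?thesis by (simp add: power_le_one_iff abs_le_square_iff)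
qed

lemma povm_bound:
  assumes p: "psd N M0" and s: "M0 + M1 = 1\<^sub>m N" and v: "v \<in> carrier_vec N"
    and C: "\<And>k. k < N \<Longrightarrow> cmod (v$k) \<le> C"
  shows "Re (trace_mat (M1 * outer_proj v)) \<le> real N * C\<^sup>2"
proof -
  have M0: "M0 \<in> carrier_mat N N" using p by (simp add: psd_def)
  have M1: "M1 \<in> carrier_mat N N" using s M0
    by (metis add_carrier_mat carrier_matD(1) carrier_matD(2) carrier_matI index_add_mat(2) index_add_mat(3) index_one_mat(2) index_one_mat(3))
  have e: "M1 $$ (k,l) = (if k = l then 1 else 0) - M0 $$ (k,l)" if "k < N" "l < N" for k l
  proof -
    have "(M0 + M1) $$ (k,l) = M0 $$ (k,l) + M1 $$ (k,l)" using that M0 M1 by simp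
    thus ?thesis using s that by simp
  qed
  have "(M1 *\<^sub>v v) \<bullet>c v = (\<Sum>k<N. \<Sum>l<N. cnj (v$k) * ((if k = l then 1 else 0) - M0 $$ (k,l)) * v$l)"
    unfolding qf[OF v M1] by (intro sum.cong refl, simp add: e)
  also have "\<dots> = (\<Sum>k<N. \<Sum>l<N. cnj (v$k) * (if k = l then 1 else 0) * v$l) - (\<Sum>k<N. \<Sum>l<N. cnj (v$k) * M0 $$ (k,l) * v$l)"
    by (simp add: algebra_simps sum_subtractf)
  also have "(\<Sum>k<N. \<Sum>l<N. cnj (v$k) * (if k = l then 1 else 0) * v$l) = v \<bullet>c v"
    using v by (simp add: scalar_prod_def lessThan_atLeast0 if_distrib if_distribR mult.commute cong: if_cong)
  also have "(\<Sum>k<N. \<Sum>l<N. cnj (v$k) * M0 $$ (k,l) * v$l) = (M0 *\<^sub>v v) \<bullet>c v"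
    unfolding qf[OF v M0] ..
  finally have eq: "(M1 *\<^sub>v v) \<bullet>c v = v \<bullet>c v - (M0 *\<^sub>v v) \<bullet>c v" .
  have "0 \<le> Re ((M0 *\<^sub>v v) \<bullet>c v)" using p v by (simp add: psd_def)
  hence "Re ((M1 *\<^sub>v v) \<bullet>c v) \<le> (\<Sum>k<N. (cmod (v$k))\<^sup>2)"
    unfolding eq self_prod[OF v] by simp
  also have "\<dots> \<le> (\<Sum>k<N. C\<^sup>2)"
    by (intro sum_mono power_mono C) auto
  finally show ?thesis unfolding trace_outer[OF v M1] by simp
qed

definition alpha :: "nat \<Rightarrow> nat \<Rightarrow> nat \<Rightarrow> complex" where
  "alpha d a i = cis (2 * pi * real a * real i / real d) / complex_of_real (sqrt (real d))"

lemma cis_ne1: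
  assumes "i < d" "j < d" "i \<noteq> j"
  shows "cis (2 * pi * (real j - real i) / real d) \<noteq> 1"
proof
  assume "cis (2 * pi * (real j - real i) / real d) = 1"
  then obtain n where n: "2 * pi * (real j - real i) / real d = of_int n * (2 * pi)"
    by (auto simp: cis_eq_1_iff)
  have d: "real d > 0" using assms by simp
  have "2 * pi * (real j - real i) = 2 * pi * (of_int n * real d)" using n d by (simp add: field_simps)
  hence "real j - real i = of_int n * real d" by simp
  hence "int j - int i = n * int d"
    by (metis of_int_eq_iff of_int_mult of_int_of_nat_eq of_int_diff)
  moreover have "n \<noteq> 0" using calculation assms by auto
  ultimately show False using assms
  proof (cases "n > 0")
    case True
    hence "n * int d \<ge> 1 * int d" using mult_right_mono[of 1 n "int d"] by linarith
    thus False using \<open>int j - int i = n * int d\<close> assms by linarith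
  next
    case False
    hence "n \<le> -1" using \<open>n \<noteq> 0\<close> by simp
    hence "n * int d \<le> (-1) * int d" using mult_right_mono[of n "-1" "int d"] by linarith
    thus False using \<open>int j - int i = n * int d\<close> assms by linarith
  qed
qed

lemma roots:
  assumes "i < d" "j < d"
  shows "(\<Sum>a<d. cnj (alpha d a i) * alpha d a j) = (if i = j then 1 else 0)"
proof -
  have d: "real d > 0" using assms by simp
  let ?z = "cis (2 * pi * (real j - real i) / real d)"
  have t: "cnj (alpha d a i) * alpha d a j = ?z ^ a / of_real (real d)" for a
  proof -
    have "cnj (alpha d a i) * alpha d a j
        = cis (- (2 * pi * real a * real i / real d) + 2 * pi * real a * real j / real d) / (of_real (sqrt (real d)) * of_real (sqrt (real d)))"
    proof -
      have "cnj (cis (2 * pi * real a * real i / real d)) * cis (2 * pi * real a * real j / real d)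
          = cis (- (2 * pi * real a * real i / real d) + 2 * pi * real a * real j / real d)"
        by (simp only: cis_cnj cis_mult)
      thus ?thesis unfolding alpha_def by (simp only: complex_cnj_divide complex_cnj_complex_of_real times_divide_times_eq)
    qed
    also have "of_real (sqrt (real d)) * of_real (sqrt (real d)) = (of_real (real d) :: complex)"
      using d by (simp flip: of_real_mult)
    also have "- (2 * pi * real a * real i / real d) + 2 * pi * real a * real j / real d
        = real a * (2 * pi * (real j - real i) / real d)"
      using d by (simp add: field_simps)
    finally show ?thesis by (simp only: DeMoivre)
  qed
  show ?thesis
  proof (cases "i = j")
    case True
    have "(\<Sum>a<d. cnj (alpha d a i) * alpha d a j) = (\<Sum>a<d. 1 / (of_real (real d) :: complex))"
      using t[unfolded True] True by (intro sum.cong) simp_all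
    thus ?thesis using d True by simp
  next
    case False
    have "?z ^ d = cis (2 * pi * of_int (int j - int i))"
      using d by (simp add: DeMoivre)
    also have "\<dots> = 1" by (rule cis_multiple_2pi) simp
    finally have zd: "?z ^ d = 1" .
    have "(\<Sum>a<d. cnj (alpha d a i) * alpha d a j) = (\<Sum>a<d. ?z ^ a) / of_real (real d)"
      by (simp add: t sum_divide_distrib)
    also have "(\<Sum>a<d. ?z ^ a) = 0"
      using geometric_sum[OF cis_ne1[OF assms False]] zd by simp
    finally show ?thesis using False by simp
  qed
qed

lemma sum_delta_vec:
  fixes X :: "nat \<Rightarrow> complex"
  assumes "\<And>i. i < m \<Longrightarrow> g i < N"
  shows "(\<Sum>k<N. (\<Sum>i<m. c i * (if k = g i then 1 else 0)) * X k) = (\<Sum>i<m. c i * X (g i))"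
  apply (simp add: sum_distrib_right if_distrib if_distribR cong: if_cong)
  apply (subst sum.swap)
  apply (simp add: assms)
  done

lemma qf_combo:
  fixes M :: "complex mat"
  assumes v: "\<And>k. k < N \<Longrightarrow> v$k = (\<Sum>i<m. c i * (if k = g i then 1 else 0))"
    and g: "\<And>i. i < m \<Longrightarrow> g i < N"
  shows "(\<Sum>k<N. \<Sum>l<N. cnj (v$k) * M$$(k,l) * v$l) = (\<Sum>i<m. \<Sum>j<m. cnj (c i) * M$$(g i, g j) * c j)"
proof -
  have inner: "(\<Sum>l<N. M$$(k,l) * v$l) = (\<Sum>j<m. M$$(k, g j) * c j)" for k
  proof -
    have "(\<Sum>l<N. M$$(k,l) * v$l) = (\<Sum>l<N. (\<Sum>i<m. c i * (if l = g i then 1 else 0)) * M$$(k,l))"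
      by (intro sum.cong refl) (simp add: v mult.commute)
    also have "\<dots> = (\<Sum>j<m. c j * M$$(k, g j))" by (rule sum_delta_vec[OF g])
    finally show ?thesis by (simp add: mult.commute)
  qed
  have "(\<Sum>k<N. \<Sum>l<N. cnj (v$k) * M$$(k,l) * v$l) = (\<Sum>k<N. cnj (v$k) * (\<Sum>j<m. M$$(k, g j) * c j))"
    by (simp add: inner[symmetric] sum_distrib_left mult.assoc)
  also have "\<dots> = (\<Sum>k<N. (\<Sum>i<m. cnj (c i) * (if k = g i then 1 else 0)) * (\<Sum>j<m. M$$(k, g j) * c j))"
    by (intro sum.cong refl) (simp add: v cnj_sum if_distrib cong: if_cong)
  also have "\<dots> = (\<Sum>i<m. cnj (c i) * (\<Sum>j<m. M$$(g i, g j) * c j))"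
    by (rule sum_delta_vec[OF g])
  finally show ?thesis by (simp add: sum_distrib_left mult.assoc)
qed

lemma tensor_unit:
  assumes "k < d * d" "i < d"
  shows "tensor_vec (unit_vec d i) (unit_vec d i) $ k = (if k = i * d + i then 1 else 0)"
proof -
  have d: "d > 0" using assms by simp
  have a: "k div d < d" using assms by (simp add: div_less_iff_less_mult)
  have b: "k mod d < d" using d by simp
  have c: "(k div d = i \<and> k mod d = i) \<longleftrightarrow> k = i * d + i"
    using d assms(2) by (metis div_mult_mod_eq mod_less mod_mult_self3 div_mult_self3 div_less add.commute mult.commute div_by_Suc_0 gr_implies_not0 add_0_right)
  show ?thesis unfolding tensor_vec_def using assms a b c by auto
qed

lemma states_bound:
  assumes d: "d \<ge> 1" and r: "\<rho> \<in> product_states d \<union> max_entangled_states d"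
  shows "\<exists>v. v \<in> carrier_vec (d*d) \<and> \<rho> = outer_proj v \<and> (\<forall>k<d*d. cmod (v$k) \<le> real d)"
  using r
proof
  assume "\<rho> \<in> product_states d"
  then obtain \<phi> \<psi> where r: "\<rho> = outer_proj (tensor_vec \<phi> \<psi>)" and u: "unit_vector d \<phi>" "unit_vector d \<psi>"
    unfolding product_states_def by blast
  have c: "\<phi> \<in> carrier_vec d" "\<psi> \<in> carrier_vec d" using u by (auto simp: unit_vector_def)
  have "cmod (tensor_vec \<phi> \<psi> $ k) \<le> real d" if k: "k < d*d" for k
  proof -
    have a: "k div d < d" using k d by (simp add: div_less_iff_less_mult)
    have b: "k mod d < d" using d by simp
    have "cmod (tensor_vec \<phi> \<psi> $ k) = cmod (\<phi> $ (k div d)) * cmod (\<psi> $ (k mod d))"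
      using c k unfolding tensor_vec_def by (simp add: norm_mult)
    also have "\<dots> \<le> 1 * 1"
      using unit_entry[of \<phi> d "k div d"] unit_entry[of \<psi> d "k mod d"] u a b c
      by (intro mult_mono) (auto simp: unit_vector_def)
    finally show ?thesis using d by simp
  qed
  moreover have "tensor_vec \<phi> \<psi> \<in> carrier_vec (d*d)" using c unfolding tensor_vec_def by simp
  ultimately show ?thesis using r by blast
next
  assume "\<rho> \<in> max_entangled_states d"
  then obtain \<Psi> where r: "\<rho> = outer_proj \<Psi>" and cv: "\<Psi> \<in> carrier_vec (d*d)" and me: "maximally_entangled d \<Psi>"
    unfolding max_entangled_states_def by blast
  then obtain e f and \<alpha> :: "nat \<Rightarrow> complex" where e: "orthonormal_basis d e" and f: "orthonormal_basis d f"
    and al: "\<forall>i<d. (cmod (\<alpha> i))\<^sup>2 = 1 / real d"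
    and P: "\<Psi> = vec (d * d) (\<lambda>k. \<Sum>i<d. \<alpha> i * tensor_vec (e i) (f i) $ k)"
    unfolding maximally_entangled_def by blast
  have "cmod (\<Psi> $ k) \<le> real d" if k: "k < d*d" for k
  proof -
    have a: "k div d < d" using k d by (simp add: div_less_iff_less_mult)
    have b: "k mod d < d" using d by simp
    have "cmod (\<Psi> $ k) \<le> (\<Sum>i<d. cmod (\<alpha> i * tensor_vec (e i) (f i) $ k))"
      unfolding P using k by (simp add: norm_sum)
    also have "\<dots> \<le> (\<Sum>i<d. 1)"
    proof (intro sum_mono)
      fix i assume i: "i \<in> {..<d}"
      have ce: "e i \<in> carrier_vec d" "f i \<in> carrier_vec d" "e i \<bullet>c e i = 1" "f i \<bullet>c f i = 1"
        using e f i unfolding orthonormal_basis_def by auto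
      have "(cmod (\<alpha> i))\<^sup>2 \<le> 1" using al i d by simp
      hence A: "cmod (\<alpha> i) \<le> 1" by (simp add: power_le_one_iff abs_le_square_iff)
      have "cmod (\<alpha> i * tensor_vec (e i) (f i) $ k) = cmod (\<alpha> i) * (cmod (e i $ (k div d)) * cmod (f i $ (k mod d)))"
        using ce k unfolding tensor_vec_def by (simp add: norm_mult)
      also have "\<dots> \<le> 1 * (1 * 1)"
        using unit_entry[OF ce(1) ce(3) a] unit_entry[OF ce(2) ce(4) b] A
        by (intro mult_mono) auto
      finally show "cmod (\<alpha> i * tensor_vec (e i) (f i) $ k) \<le> 1" by simp
    qed
    finally show ?thesis by simp
  qed
  thus ?thesis using r cv by blast
qed

lemma prob_bound:
  assumes d: "d \<ge> 1" and p: "psd (d*d) M0" and s: "M0 + M1 = 1\<^sub>m (d*d)"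
    and r: "\<rho> \<in> product_states d \<union> max_entangled_states d"
  shows "outcome_prob M1 \<rho> \<le> real (d*d) * (real d)\<^sup>2"
proof -
  obtain v where v: "v \<in> carrier_vec (d*d)" "\<rho> = outer_proj v" "\<forall>k<d*d. cmod (v$k) \<le> real d"
    using states_bound[OF d r] by blast
  show ?thesis unfolding outcome_prob_def v(2)
    by (rule povm_bound[OF p s v(1)]) (use v(3) in auto)
qed

theorem theorem6p1:
  fixes n :: nat and M0 M1 :: "complex mat"
  defines "d \<equiv> 2 ^ n"
  assumes "two_outcome_povm (d * d) M0 M1"
  shows "(SUP \<rho>\<in>product_states d. outcome_prob M1 \<rho>)
         + (SUP \<rho>\<in>max_entangled_states d. outcome_prob M0 \<rho>) \<ge> 1"
proof -
  have d: "d \<ge> 1" unfolding d_def by simp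
  have p0: "psd (d*d) M0" and p1: "psd (d*d) M1" and s: "M0 + M1 = 1\<^sub>m (d*d)"
    using assms(2) unfolding two_outcome_povm_def by auto
  have M0c: "M0 \<in> carrier_mat (d*d) (d*d)" and M1c: "M1 \<in> carrier_mat (d*d) (d*d)"
    using p0 p1 by (auto simp: psd_def)
  have s': "M1 + M0 = 1\<^sub>m (d*d)" using s comm_add_mat[OF M0c M1c] by simp
  define S1 where "S1 = (SUP \<rho>\<in>product_states d. outcome_prob M1 \<rho>)"
  define S0 where "S0 = (SUP \<rho>\<in>max_entangled_states d. outcome_prob M0 \<rho>)"
  have bdd1: "bdd_above (outcome_prob M1 ` product_states d)"
    using prob_bound[OF d p0 s] by (intro bdd_aboveI2) auto
  have bdd0: "bdd_above (outcome_prob M0 ` max_entangled_states d)"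
    using prob_bound[OF d p1 s'] by (intro bdd_aboveI2) auto
  define g where "g i = i * d + i" for i
  have g: "g i < d * d" if "i < d" for i
  proof -
    have "g i \<le> (d - 1) * d + i" unfolding g_def using that by (intro add_mono mult_right_mono) auto
    also have "\<dots> < (d - 1) * d + d" using that by simp
    also have "\<dots> = d * d" using d by (simp add: algebra_simps)
    finally show ?thesis .
  qed
  have ifm: "(if P then 1 else 0) * cnj (if Q then 1 else 0) = (if P \<and> Q then (1::complex) else 0)" for P Q
    by auto
  have uu: "(unit_vec d i :: complex vec) \<bullet>c unit_vec d j = (if i = j then 1 else 0)" if "i < d" "j < d" for i j
  proof -
    have "(unit_vec d i :: complex vec) \<bullet>c unit_vec d j = (\<Sum>k\<in>{0..<d}. if k = i \<and> k = j then 1 else 0)"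
      unfolding scalar_prod_def using that by (intro sum.cong) (auto simp: ifm)
    also have "\<dots> = (\<Sum>k\<in>{0..<d}. if k = i then (if i = j then 1 else 0) else 0)"
      by (intro sum.cong) auto
    also have "\<dots> = (if i = j then 1 else 0)" using that by (simp add: sum.delta)
    finally show ?thesis .
  qed
  have unitv: "unit_vector d (unit_vec d i)" if "i < d" for i
    using that uu[of i i] by (simp add: unit_vector_def)
  have onb: "orthonormal_basis d (unit_vec d)"
    unfolding orthonormal_basis_def using uu by auto
  have prod_val: "outcome_prob M1 (outer_proj (tensor_vec (unit_vec d i) (unit_vec d i))) = Re (M1 $$ (g i, g i))"
    and prod_mem: "outer_proj (tensor_vec (unit_vec d i) (unit_vec d i)) \<in> product_states d"
    if i: "i < d" for i
  proof -
    let ?v = "tensor_vec (unit_vec d i) (unit_vec d i)"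
    have vc: "?v \<in> carrier_vec (d*d)" unfolding tensor_vec_def by simp
    have vk: "?v $ k = (\<Sum>i'<(1::nat). 1 * (if k = g i then 1 else 0))" if "k < d*d" for k
      using tensor_unit[OF that i] by (simp add: g_def card_lessThan)
    have "outcome_prob M1 (outer_proj ?v) = Re (\<Sum>k<d*d. \<Sum>l<d*d. cnj (?v$k) * M1$$(k,l) * ?v$l)"
      unfolding outcome_prob_def trace_outer[OF vc M1c] qf[OF vc M1c] ..
    also have "\<dots> = Re (\<Sum>i'<(1::nat). \<Sum>j'<(1::nat). cnj 1 * M1$$(g i, g i) * 1)"
      by (subst qf_combo[where m="1::nat" and c="\<lambda>_. 1" and g="\<lambda>_. g i"]) (use vk g i in auto)
    finally show "outcome_prob M1 (outer_proj ?v) = Re (M1 $$ (g i, g i))" by simp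
    show "outer_proj ?v \<in> product_states d"
      unfolding product_states_def using unitv[OF i] by blast
  qed
  define Psi where "Psi a = vec (d*d) (\<lambda>k. \<Sum>i<d. alpha d a i * tensor_vec (unit_vec d i) (unit_vec d i) $ k)" for a
  have ent_val: "outcome_prob M0 (outer_proj (Psi a)) = Re (\<Sum>i<d. \<Sum>j<d. cnj (alpha d a i) * M0$$(g i, g j) * alpha d a j)"
    and ent_mem: "outer_proj (Psi a) \<in> max_entangled_states d" for a
  proof -
    have vc: "Psi a \<in> carrier_vec (d*d)" unfolding Psi_def by simp
    have vk: "Psi a $ k = (\<Sum>i<d. alpha d a i * (if k = g i then 1 else 0))" if "k < d*d" for k
      unfolding Psi_def using that by (simp add: tensor_unit g_def)
    have "outcome_prob M0 (outer_proj (Psi a)) = Re (\<Sum>k<d*d. \<Sum>l<d*d. cnj (Psi a$k) * M0$$(k,l) * Psi a$l)"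
      unfolding outcome_prob_def trace_outer[OF vc M0c] qf[OF vc M0c] ..
    also have "\<dots> = Re (\<Sum>i<d. \<Sum>j<d. cnj (alpha d a i) * M0$$(g i, g j) * alpha d a j)"
      by (subst qf_combo[where m=d and c="alpha d a" and g=g]) (use vk g in auto)
    finally show "outcome_prob M0 (outer_proj (Psi a)) = Re (\<Sum>i<d. \<Sum>j<d. cnj (alpha d a i) * M0$$(g i, g j) * alpha d a j)" .
    have al: "(cmod (alpha d a i))\<^sup>2 = 1 / real d" for i
      using d by (simp add: alpha_def norm_divide power_divide)
    have "maximally_entangled d (Psi a)"
      unfolding maximally_entangled_def using onb al Psi_def by blast
    thus "outer_proj (Psi a) \<in> max_entangled_states d"
      unfolding max_entangled_states_def using vc by blast
  qed
  have swap3: "(\<Sum>a<d. \<Sum>i<d. \<Sum>j<d. cnj (alpha d a i) * M0$$(g i, g j) * alpha d a j)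
      = (\<Sum>i<d. \<Sum>j<d. M0$$(g i, g j) * (\<Sum>a<d. cnj (alpha d a i) * alpha d a j))"
  proof -
    have "(\<Sum>a<d. \<Sum>i<d. \<Sum>j<d. cnj (alpha d a i) * M0$$(g i, g j) * alpha d a j)
        = (\<Sum>i<d. \<Sum>a<d. \<Sum>j<d. cnj (alpha d a i) * M0$$(g i, g j) * alpha d a j)"
      by (rule sum.swap)
    also have "\<dots> = (\<Sum>i<d. \<Sum>j<d. \<Sum>a<d. cnj (alpha d a i) * M0$$(g i, g j) * alpha d a j)"
      by (intro sum.cong refl sum.swap)
    also have "\<dots> = (\<Sum>i<d. \<Sum>j<d. M0$$(g i, g j) * (\<Sum>a<d. cnj (alpha d a i) * alpha d a j))"
      by (simp add: sum_distrib_left mult.commute mult.left_commute)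
    finally show ?thesis .
  qed
  have ent_sum: "(\<Sum>a<d. outcome_prob M0 (outer_proj (Psi a))) = (\<Sum>i<d. Re (M0 $$ (g i, g i)))"
  proof -
    have "(\<Sum>a<d. outcome_prob M0 (outer_proj (Psi a)))
        = Re (\<Sum>a<d. \<Sum>i<d. \<Sum>j<d. cnj (alpha d a i) * M0$$(g i, g j) * alpha d a j)"
      by (simp add: ent_val Re_sum)
    also have "\<dots> = Re (\<Sum>i<d. \<Sum>j<d. M0$$(g i, g j) * (if i = j then 1 else 0))"
      unfolding swap3 by (intro arg_cong[where f=Re] sum.cong refl) (simp add: roots)
    also have "\<dots> = (\<Sum>i<d. Re (M0 $$ (g i, g i)))"
      by (simp add: Re_sum if_distrib cong: if_cong)
    finally show ?thesis .
  qed
  have A: "(\<Sum>i<d. Re (M1 $$ (g i, g i))) \<le> real d * S1"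
  proof -
    have "(\<Sum>i<d. Re (M1 $$ (g i, g i))) \<le> (\<Sum>i<d. S1)"
    proof (intro sum_mono)
      fix i assume i: "i \<in> {..<d}"
      show "Re (M1 $$ (g i, g i)) \<le> S1"
        unfolding S1_def prod_val[symmetric, OF i[simplified]]
        by (rule cSUP_upper[OF prod_mem bdd1]) (use i in simp)
    qed
    thus ?thesis by simp
  qed
  have B: "(\<Sum>i<d. Re (M0 $$ (g i, g i))) \<le> real d * S0"
  proof -
    have "(\<Sum>a<d. outcome_prob M0 (outer_proj (Psi a))) \<le> (\<Sum>a<d. S0)"
      unfolding S0_def by (intro sum_mono cSUP_upper[OF ent_mem bdd0])
    thus ?thesis unfolding ent_sum by simp
  qed
  have C: "(\<Sum>i<d. Re (M0 $$ (g i, g i)) + Re (M1 $$ (g i, g i))) = real d"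
  proof -
    have "(\<Sum>i<d. Re (M0 $$ (g i, g i)) + Re (M1 $$ (g i, g i))) = (\<Sum>i<d. 1)"
    proof (intro sum.cong refl)
      fix i assume i: "i \<in> {..<d}"
      have "(M0 + M1) $$ (g i, g i) = M0 $$ (g i, g i) + M1 $$ (g i, g i)"
        using g[of i] i M0c M1c by simp
      hence "M0 $$ (g i, g i) + M1 $$ (g i, g i) = 1" using s g[of i] i by simp
      thus "Re (M0 $$ (g i, g i)) + Re (M1 $$ (g i, g i)) = 1"
        by (metis one_complex.simps(1) plus_complex.simps(1))
    qed
    thus ?thesis by simp
  qed
  have "real d * 1 \<le> real d * (S1 + S0)"
    using A B C by (simp add: sum.distrib algebra_simps)
  hence "1 \<le> S1 + S0" using d by simp
  thus ?thesis unfolding S1_def S0_def .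
qed

end
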